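(* Let $\mathcal L$ be a finite distributive lattice, $p\in\mathcal L$ and $S\subseteq N(p)$ with $|S|=i$. Let $r=\bigwedge\{q: q\in S\}$ and let $T$ be the set of all upper neighbors of $r$ in the interval $[r,p]$. Then (1) $|T|=i$ and $\bigvee T=p$; (2) $\mathrm{lcm}(u_p,\{u_q\}_{q\in S})=\mathrm{lcm}(u_r,\{u_s\}_{s\in T})$; (3) for any $r'\neq r$ and any $T'\subseteq M(r')$, one has $\mathrm{lcm}(u_{r'},\{u_{s'}\}_{s'\in T'})\neq\mathrm{lcm}(u_p,\{u_q\}_{q\in S})$.
   Context: Let $P$ be the set of join-irreducible elements of $\mathcal L$ (elements with exactly one lower neighbor); for $p\in\mathcal L$ put $\ell(p)=\{q\in P:q\le p\}$. Let $K$ be a field, $S=K[x_p,y_p:p\in P]$ and for $q\in\mathcal L$, $u_q=\prod_{p\in\ell(q)}x_p\prod_{p\in P\setminus\ell(q)}y_p$. $N(p)$ is the set of lower neighbors of $p$ (elements covered by $p$), $M(r)$ the set of upper neighbors of $r$ (elements covering $r$); $[r,p]=\{t:r\le t\le p\}$. *)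

theory Defs
  imports Main
begin

definition covers :: "'a::order \<Rightarrow> 'a \<Rightarrow> bool" where
  "covers p q \<longleftrightarrow> q < p \<and> \<not> (\<exists>t. q < t \<and> t < p)"

definition lower_nbrs :: "'a::order \<Rightarrow> 'a set" where
  "lower_nbrs p = {q. covers p q}"

definition upper_nbrs :: "'a::order \<Rightarrow> 'a set" where
  "upper_nbrs r = {s. covers s r}"

definition join_irr :: "'a::order set" where
  "join_irr = {p. card (lower_nbrs p) = 1}"

definition ell :: "'a::order \<Rightarrow> 'a set" where
  "ell p = {q \<in> join_irr. q \<le> p}"

(* Monomials in S = K[x_p, y_p : p in P] are represented by exponent vectors.
   The variable x_p is Inl p, the variable y_p is Inr p. *)
type_synonym 'a monomial = "'a + 'a \<Rightarrow> nat"

definition umon :: "'a::order \<Rightarrow> 'a monomial" where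
  "umon q v = (case v of
      Inl p \<Rightarrow> (if p \<in> ell q then 1 else 0)
    | Inr p \<Rightarrow> (if p \<in> join_irr - ell q then 1 else 0))"

definition mlcm :: "'a monomial set \<Rightarrow> 'a monomial" where
  "mlcm A v = Max ((\<lambda>m. m v) ` A)"

end

theory Submission
  imports Defs
begin

lemma below_cover:
  fixes x j :: "'a::{finite, order}"
  assumes "x < j"
  shows "\<exists>c. covers j c \<and> x \<le> c"
proof -
  have ne: "{y. x \<le> y \<and> y < j} \<noteq> {}" using assms by blast
  obtain m where m: "m \<in> {y. x \<le> y \<and> y < j}" "\<forall>b \<in> {y. x \<le> y \<and> y < j}. m \<le> b \<longrightarrow> m = b"
    using finite_has_maximal[OF finite ne] by blast
  have "covers j m" unfolding covers_def
  proof (intro conjI notI)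
    show "m < j" using m by simp
    assume "\<exists>t. m < t \<and> t < j"
    then obtain t where t: "m < t" "t < j" by blast
    have xm: "x \<le> m" using m(1) by simp
    have "x \<le> t" using order.trans[OF xm order.strict_implies_order[OF t(1)]] .
    then have "t \<in> {y. x \<le> y \<and> y < j}" using t(2) by simp
    then have "m = t" using m(2) order.strict_implies_order[OF t(1)] by blast
    then show False using t by simp
  qed
  then show ?thesis using m by auto
qed

lemma ji_prime:
  fixes j a b :: "'a::{finite, distrib_lattice}"
  assumes "j \<in> join_irr" "j \<le> sup a b"
  shows "j \<le> a \<or> j \<le> b"
proof (rule ccontr)
  assume n: "\<not> (j \<le> a \<or> j \<le> b)"
  have "card (lower_nbrs j) = 1" using assms(1) unfolding join_irr_def by simp
  then obtain c where lc: "lower_nbrs j = {c}" by (auto simp: card_Suc_eq)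
  have "inf j a < j" using n by (metis inf.cobounded1 inf.cobounded2 less_le)
  then obtain c1 where "covers j c1" "inf j a \<le> c1" using below_cover by blast
  then have 1: "inf j a \<le> c" using lc unfolding lower_nbrs_def by auto
  have "inf j b < j" using n by (metis inf.cobounded1 inf.cobounded2 less_le)
  then obtain c2 where "covers j c2" "inf j b \<le> c2" using below_cover by blast
  then have 2: "inf j b \<le> c" using lc unfolding lower_nbrs_def by auto
  have "j = inf j (sup a b)" using assms(2) by (simp add: inf.absorb1)
  also have "\<dots> = sup (inf j a) (inf j b)" by (rule inf_sup_distrib1)
  also have "\<dots> \<le> c" using 1 2 by simp
  finally have "j \<le> c" .
  moreover have "c < j" using lc unfolding lower_nbrs_def covers_def by auto
  ultimately show False by simp
qed

lemma ell_sup: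
  fixes a b :: "'a::{finite, distrib_lattice}"
  shows "ell (sup a b) = ell a \<union> ell b"
  unfolding ell_def using ji_prime by (auto intro: le_supI1 le_supI2)

lemma ell_mono: "(a::'a::order) \<le> b \<Longrightarrow> ell a \<subseteq> ell b"
  unfolding ell_def by auto

lemma ell_le_aux:
  fixes a b :: "'a::{finite, distrib_lattice}"
  shows "card {x. x < a} = n \<Longrightarrow> ell a \<subseteq> ell b \<Longrightarrow> a \<le> b"
proof (induction n arbitrary: a rule: less_induct)
  case (less n)
  show ?case
  proof (rule ccontr)
    assume nab: "\<not> a \<le> b"
    have "inf a b < a" using nab by (metis inf.cobounded1 inf.cobounded2 less_le)
    then obtain c where c: "covers a c" "inf a b \<le> c" using below_cover by blast
    have "a \<notin> join_irr" using nab less.prems(2) unfolding ell_def by auto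
    moreover have "c \<in> lower_nbrs a" using c unfolding lower_nbrs_def by simp
    moreover have "lower_nbrs a \<noteq> {c}" using \<open>a \<notin> join_irr\<close> unfolding join_irr_def by auto
    ultimately obtain c' where c': "c' \<in> lower_nbrs a" "c' \<noteq> c" by blast
    have ca: "c < a" "c' < a" using c c' unfolding lower_nbrs_def covers_def by auto
    have IH: "x < a \<Longrightarrow> x \<le> b" for x
    proof -
      assume xa: "x < a"
      have "{y. y < x} \<subset> {y. y < a}" using xa by (auto intro: less_trans)
      then have "card {y. y < x} < card {y. y < a}" by (simp add: psubset_card_mono)
      moreover have "ell x \<subseteq> ell a" using xa by (simp add: ell_mono)
      then have "ell x \<subseteq> ell b" using less.prems(2) by blast
      ultimately show "x \<le> b" using less.IH less.prems(1) by blast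
    qed
    have "sup c c' = a"
    proof (rule ccontr)
      assume "sup c c' \<noteq> a"
      moreover have "sup c c' \<le> a" using ca by (simp add: order.strict_implies_order)
      ultimately have "sup c c' < a" by (simp add: less_le)
      moreover have "c < sup c c'"
      proof -
        have "c \<noteq> sup c c'"
        proof
          assume "c = sup c c'"
          then have "c' \<le> c" using sup.cobounded2[of c' c] by simp
          then have "c' < c" using c' by simp
          then show False using ca c' unfolding lower_nbrs_def covers_def by blast
        qed
        then show ?thesis by (simp add: less_le)
      qed
      ultimately show False using c unfolding covers_def by blast
    qed
    moreover have "sup c c' \<le> b" using IH ca by simp
    ultimately have "a \<le> b" by simp
    then show False using nab by simp
  qed
qed

lemma ell_le_iff:
  fixes a b :: "'a::{finite, distrib_lattice}"
  shows "ell a \<subseteq> ell b \<longleftrightarrow> a \<le> b"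
  using ell_le_aux ell_mono by blast

lemma ell_inj:
  fixes a b :: "'a::{finite, distrib_lattice}"
  shows "ell a = ell b \<Longrightarrow> a = b"
proof -
  assume h: "ell a = ell b"
  have "a \<le> b" "b \<le> a" using ell_le_iff h by auto
  then show "a = b" by (rule order_antisym)
qed

lemma cover_single:
  fixes a b :: "'a::{finite, distrib_lattice}"
  assumes "covers a b"
  shows "\<exists>j. ell a - ell b = {j}"
proof -
  have ba: "b < a" using assms unfolding covers_def by simp
  have "\<not> ell a \<subseteq> ell b" using ell_le_iff ba by (meson less_le_not_le)
  then obtain j where j: "j \<in> ell a" "j \<notin> ell b" by auto
  have "k = j" if k: "k \<in> ell a" "k \<notin> ell b" for k
  proof -
    have "\<And>j k. j \<in> ell a \<Longrightarrow> j \<notin> ell b \<Longrightarrow> k \<in> ell a \<Longrightarrow> k \<notin> ell b \<Longrightarrow> k \<le> j"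
    proof -
      fix j k assume h: "j \<in> ell a" "j \<notin> ell b" "k \<in> ell a" "k \<notin> ell b"
      have "b < sup b j" using h(2) unfolding ell_def using h(1) unfolding ell_def
        by (auto simp: less_le le_iff_sup sup_commute)
      moreover have "sup b j \<le> a" using ba h(1) unfolding ell_def by auto
      ultimately have "sup b j = a" using assms unfolding covers_def by (auto simp: le_less)
      then have "k \<in> ell (sup b j)" using h(3) by simp
      then have "k \<in> ell b \<or> k \<in> ell j" by (simp add: ell_sup)
      then show "k \<le> j" using h(4) unfolding ell_def by auto
    qed
    then show ?thesis using j k by (meson order_antisym)
  qed
  then show ?thesis using j by blast
qed


lemma max01:
  assumes "finite B" "B \<noteq> {}" "B \<subseteq> {0, 1::nat}"
  shows "Max B = (if 1 \<in> B then 1 else 0)"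
proof (cases "1 \<in> B")
  case True
  then show ?thesis using assms by (intro Max_eqI) auto
next
  case False
  then have "B = {0}" using assms by auto
  then show ?thesis by simp
qed

lemma mlcm_umon:
  fixes A :: "'a::order set"
  assumes "finite A" "A \<noteq> {}"
  shows "mlcm (umon ` A) (Inl j) = (if \<exists>a\<in>A. j \<in> ell a then 1 else 0)"
    and "mlcm (umon ` A) (Inr j) = (if \<exists>a\<in>A. j \<in> join_irr - ell a then 1 else 0)"
proof -
  have "(\<lambda>m. m (Inl j)) ` umon ` A = (\<lambda>a. if j \<in> ell a then 1 else 0) ` A"
    unfolding umon_def by (auto simp: image_image)
  moreover have "Max ((\<lambda>a. if j \<in> ell a then 1 else (0::nat)) ` A) = (if \<exists>a\<in>A. j \<in> ell a then 1 else 0)"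
    by (subst max01) (use assms in auto)
  ultimately show "mlcm (umon ` A) (Inl j) = (if \<exists>a\<in>A. j \<in> ell a then 1 else 0)"
    unfolding mlcm_def by simp
  have "(\<lambda>m. m (Inr j)) ` umon ` A = (\<lambda>a. if j \<in> join_irr - ell a then 1 else 0) ` A"
    unfolding umon_def by (auto simp: image_image)
  moreover have "Max ((\<lambda>a. if j \<in> join_irr - ell a then 1 else (0::nat)) ` A) = (if \<exists>a\<in>A. j \<in> join_irr - ell a then 1 else 0)"
    by (subst max01) (use assms in auto)
  ultimately show "mlcm (umon ` A) (Inr j) = (if \<exists>a\<in>A. j \<in> join_irr - ell a then 1 else 0)"
    unfolding mlcm_def by simp
qed

theorem lemma3p5:
  fixes p :: "'a::{finite, distrib_lattice}"
    and S :: "'a set" and i :: nat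
  assumes "S \<subseteq> lower_nbrs p"
    and "card S = i"
    and "S \<noteq> {}"
  defines "r \<equiv> Inf_fin S"
  defines "T \<equiv> {s \<in> upper_nbrs r. r \<le> s \<and> s \<le> p}"
  shows "(card T = i \<and> Sup_fin T = p)
    \<and> mlcm (insert (umon p) (umon ` S)) = mlcm (insert (umon r) (umon ` T))
    \<and> (\<forall>r' T'. r' \<noteq> r \<and> T' \<subseteq> upper_nbrs r' \<longrightarrow>
           mlcm (insert (umon r') (umon ` T')) \<noteq> mlcm (insert (umon p) (umon ` S)))"
proof -
  have Sfin: "finite S" by simp
  have cov: "q \<in> S \<Longrightarrow> covers p q" for q using assms(1) unfolding lower_nbrs_def by auto
  have qp: "q \<in> S \<Longrightarrow> q < p" for q using cov unfolding covers_def by auto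
  have rq: "q \<in> S \<Longrightarrow> r \<le> q" for q unfolding r_def using Sfin by (rule Inf_fin.coboundedI)
  have ellr: "x \<in> ell r \<longleftrightarrow> x \<in> join_irr \<and> (\<forall>q\<in>S. x \<in> ell q)" for x
    unfolding r_def ell_def using Inf_fin.bounded_iff[OF Sfin assms(3)] by auto
  obtain q0 where q0: "q0 \<in> S" using assms(3) by auto
  have rp: "r < p" using rq[OF q0] qp[OF q0] by simp
  have "\<forall>q\<in>S. \<exists>j. ell p - ell q = {j}" using cov cover_single by blast
  define jf where "jf q = (SOME j. ell p - ell q = {j})" for q
  have jf: "ell p - ell q = {jf q}" if "q \<in> S" for q
  proof -
    have "\<exists>j. ell p - ell q = {j}" using \<open>\<forall>q\<in>S. \<exists>j. ell p - ell q = {j}\<close> that by (rule bspec)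
    then obtain j where "ell p - ell q = {j}" by (rule exE)
    then show ?thesis unfolding jf_def by (rule someI)
  qed
  have ellq: "ell q = ell p - {jf q}" if "q \<in> S" for q
    using jf[OF that] ell_mono[OF order.strict_implies_order[OF qp[OF that]]] by blast
  have jfp: "jf q \<in> ell p" if "q \<in> S" for q using jf[OF that] by blast
  have jfr: "jf q \<notin> ell r" if "q \<in> S" for q using jf[OF that] ellr[of "jf q"] that by blast
  have jfji: "q \<in> S \<Longrightarrow> jf q \<in> join_irr" for q using jfp unfolding ell_def by auto
  have key: "\<exists>q\<in>S. k = jf q" if k: "k \<in> ell p" "k \<notin> ell r" for k
  proof -
    have kj: "k \<in> join_irr" using k(1) by (simp add: ell_def)
    have "\<not> (\<forall>q\<in>S. k \<in> ell q)" using k(2) kj ellr[of k] by simp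
    then obtain q where q: "q \<in> S" "k \<notin> ell q" by blast
    have "k \<in> ell p - ell q" using k(1) q(2) by simp
    then have "k = jf q" unfolding jf[OF q(1)] by simp
    then show ?thesis using q(1) by blast
  qed
  define f where "f q = sup r (jf q)" for q
  have ellf: "ell (f q) = insert (jf q) (ell r)" if q: "q \<in> S" for q
  proof -
    have jqp: "jf q \<le> p" using jfp[OF q] by (simp add: ell_def)
    have "ell (jf q) \<subseteq> insert (jf q) (ell r)"
    proof
      fix k assume k: "k \<in> ell (jf q)"
      show "k \<in> insert (jf q) (ell r)"
      proof (rule ccontr)
        assume nk: "k \<notin> insert (jf q) (ell r)"
        have kp: "k \<in> ell p" using k ell_mono[OF jqp] by blast
        have "k \<notin> ell r" using nk by simp
        then obtain q' where q': "q' \<in> S" "k = jf q'" using key[OF kp] by blast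
        have "jf q \<noteq> jf q'" using nk q'(2) by auto
        then have "jf q \<in> ell q'" unfolding ellq[OF q'(1)] using jfp[OF q] by simp
        then have "k \<in> ell q'" using k unfolding ell_def by (auto intro: order.trans)
        then show False unfolding ellq[OF q'(1)] using q'(2) by simp
      qed
    qed
    moreover have "jf q \<in> ell (jf q)" using jfji[OF q] unfolding ell_def by simp
    ultimately show ?thesis unfolding f_def ell_sup by blast
  qed
  have fT: "q \<in> S \<Longrightarrow> f q \<in> T" for q
  proof -
    assume q: "q \<in> S"
    have fp: "f q \<le> p" unfolding f_def using rp jfp[OF q] unfolding ell_def by auto
    have rf: "r \<le> f q" unfolding f_def by simp
    have "r \<noteq> f q" using ellf[OF q] jfr[OF q] by auto
    then have rlf: "r < f q" using rf by simp
    have "\<not> (\<exists>t. r < t \<and> t < f q)"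
    proof
      assume "\<exists>t. r < t \<and> t < f q"
      then obtain t where t: "r < t" "t < f q" by blast
      have "ell r \<subseteq> ell t" "ell t \<subseteq> ell (f q)" using t by (simp_all add: ell_mono order.strict_implies_order)
      then have "ell t = ell r \<or> ell t = ell (f q)" using ellf[OF q] by auto
      then have "t = r \<or> t = f q" using ell_inj by blast
      then show False using t by auto
    qed
    then have "covers (f q) r" unfolding covers_def using rlf by simp
    then show "f q \<in> T" unfolding T_def upper_nbrs_def using rf fp by simp
  qed
  have Tf: "s \<in> f ` S" if s: "s \<in> T" for s
  proof -
    have cs: "covers s r" and sp: "s \<le> p" using s unfolding T_def upper_nbrs_def by simp_all
    have rs: "r < s" using cs unfolding covers_def by simp
    obtain k where k: "ell s - ell r = {k}" using cover_single[OF cs] by blast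
    have ks: "k \<in> ell s" and kr: "k \<notin> ell r" using k by blast+
    have kp: "k \<in> ell p" using ks ell_mono[OF sp] by blast
    obtain q where q: "q \<in> S" "k = jf q" using key[OF kp kr] by blast
    have "ell r \<subseteq> ell s" using rs by (simp add: ell_mono order.strict_implies_order)
    then have "ell (f q) \<subseteq> ell s" unfolding ellf[OF q(1)] using ks q(2) by blast
    then have fs: "f q \<le> s" using ell_le_iff by blast
    have "f q \<in> T" by (rule fT[OF q(1)])
    then have rf: "r < f q" unfolding T_def upper_nbrs_def covers_def by simp
    have "f q = s"
    proof (rule ccontr)
      assume "f q \<noteq> s"
      then have "f q < s" using fs by simp
      then show False using rf cs unfolding covers_def by blast
    qed
    then show ?thesis using q(1) imageI[of q S f] by simp
  qed
  have injf: "inj_on f S"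
  proof
    fix q q' assume q: "q \<in> S" "q' \<in> S" "f q = f q'"
    have "jf q \<in> ell (f q')" using q(3) ellf[OF q(1)] by simp
    then have "jf q \<in> insert (jf q') (ell r)" using ellf[OF q(2)] by simp
    then have "jf q = jf q'" using jfr[OF q(1)] by simp
    then have "ell q = ell q'" using ellq[OF q(1)] ellq[OF q(2)] by simp
    then show "q = q'" by (rule ell_inj)
  qed
  have TfS: "T = f ` S" using Tf fT by blast
  have cardT: "card T = i" unfolding TfS using card_image[OF injf] assms(2) by simp
  have Tne: "T \<noteq> {}" using TfS assms(3) by simp
  have Tfin: "finite T" by simp
  have Tsub: "s \<in> T \<Longrightarrow> r \<le> s \<and> s \<le> p" for s unfolding T_def by auto
  have ellp: "x \<in> ell p \<longleftrightarrow> (\<exists>s\<in>T. x \<in> ell s)" for x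
  proof
    assume x: "x \<in> ell p"
    show "\<exists>s\<in>T. x \<in> ell s"
    proof (cases "x \<in> ell r")
      case True
      then show ?thesis using fT[OF q0] ellf[OF q0] by blast
    next
      case False
      then obtain q where "q \<in> S" "x = jf q" using key x by blast
      then show ?thesis using fT ellf by blast
    qed
  next
    assume "\<exists>s\<in>T. x \<in> ell s"
    then show "x \<in> ell p" using Tsub ell_mono by blast
  qed
  have supT: "Sup_fin T = p"
  proof (rule order_antisym)
    show "Sup_fin T \<le> p" using Sup_fin.boundedI[OF Tfin Tne] Tsub by blast
    have "ell p \<subseteq> ell (Sup_fin T)"
    proof
      fix x assume "x \<in> ell p"
      then obtain s where "s \<in> T" "x \<in> ell s" using ellp by blast
      then show "x \<in> ell (Sup_fin T)" using ell_mono Sup_fin.coboundedI[OF Tfin] by blast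
    qed
    then show "p \<le> Sup_fin T" using ell_le_iff by blast
  qed
  have Sp: "ell q \<subseteq> ell p" if "q \<in> S" for q using qp[OF that] by (simp add: ell_mono order.strict_implies_order)
  have ellrp: "ell r \<subseteq> ell p" using rp by (simp add: ell_mono order.strict_implies_order)
  have L: "mlcm (insert (umon p) (umon ` S)) v =
      (case v of Inl j \<Rightarrow> (if j \<in> ell p then 1 else 0) | Inr j \<Rightarrow> (if j \<in> join_irr - ell r then 1 else 0))" for v
  proof -
    have e: "insert (umon p) (umon ` S) = umon ` insert p S" by simp
    show ?thesis
    proof (cases v)
      case (Inl j)
      have "(\<exists>a\<in>insert p S. j \<in> ell a) \<longleftrightarrow> j \<in> ell p" using Sp by blast
      then show ?thesis unfolding e Inl using mlcm_umon(1)[of "insert p S" j] by simp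
    next
      case (Inr j)
      have "(\<exists>a\<in>insert p S. j \<in> join_irr - ell a) \<longleftrightarrow> j \<in> join_irr - ell r" using ellr ellrp by auto
      then show ?thesis unfolding e Inr using mlcm_umon(2)[of "insert p S" j] by simp
    qed
  qed
  have R: "mlcm (insert (umon r') (umon ` T')) v =
      (case v of Inl j \<Rightarrow> (if \<exists>a\<in>insert r' T'. j \<in> ell a then 1 else 0) | Inr j \<Rightarrow> (if j \<in> join_irr - ell r' then 1 else 0))"
    if T': "\<And>s. s \<in> T' \<Longrightarrow> r' \<le> s" for v r' and T' :: "'a set"
  proof -
    have e: "insert (umon r') (umon ` T') = umon ` insert r' T'" by simp
    show ?thesis
    proof (cases v)
      case (Inl j)
      then show ?thesis unfolding e Inl using mlcm_umon(1)[of "insert r' T'" j] by simp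
    next
      case (Inr j)
      have "(\<exists>a\<in>insert r' T'. j \<in> join_irr - ell a) \<longleftrightarrow> j \<in> join_irr - ell r'" using T' ell_mono by blast
      then show ?thesis unfolding e Inr using mlcm_umon(2)[of "insert r' T'" j] by simp
    qed
  qed
  have P2: "mlcm (insert (umon p) (umon ` S)) = mlcm (insert (umon r) (umon ` T))"
  proof
    fix v
    have "(\<exists>a\<in>insert r T. j \<in> ell a) \<longleftrightarrow> j \<in> ell p" for j using ellp ellrp by auto
    show "mlcm (insert (umon p) (umon ` S)) v = mlcm (insert (umon r) (umon ` T)) v"
    proof (cases v)
      case (Inl j)
      have "mlcm (insert (umon r) (umon ` T)) v = (if \<exists>a\<in>insert r T. j \<in> ell a then 1 else 0)"
        using R[where r'=r and T'=T and v=v] Tsub Inl by simp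
      then show ?thesis using L[of v] Inl \<open>\<And>j. (\<exists>a\<in>insert r T. j \<in> ell a) \<longleftrightarrow> j \<in> ell p\<close> by simp
    next
      case (Inr j)
      have "mlcm (insert (umon r) (umon ` T)) v = (if j \<in> join_irr - ell r then 1 else 0)"
        using R[where r'=r and T'=T and v=v] Tsub Inr by simp
      then show ?thesis using L[of v] Inr by simp
    qed
  qed
  have P3: "mlcm (insert (umon r') (umon ` T')) \<noteq> mlcm (insert (umon p) (umon ` S))"
    if h: "r' \<noteq> r" "T' \<subseteq> upper_nbrs r'" for r' T'
  proof
    assume eq: "mlcm (insert (umon r') (umon ` T')) = mlcm (insert (umon p) (umon ` S))"
    have T': "s \<in> T' \<Longrightarrow> r' \<le> s" for s using h(2) unfolding upper_nbrs_def covers_def by auto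
    have iff: "(j \<in> join_irr - ell r') = (j \<in> join_irr - ell r)" for j
    proof -
      have A: "mlcm (insert (umon r') (umon ` T')) (Inr j) = (if j \<in> join_irr - ell r' then 1 else 0)"
        using R[where r'=r' and T'=T' and v="Inr j", OF T'] by simp
      have B: "mlcm (insert (umon p) (umon ` S)) (Inr j) = (if j \<in> join_irr - ell r then 1 else 0)"
        using L[of "Inr j"] by simp
      have "(if j \<in> join_irr - ell r' then 1 else 0 :: nat) = (if j \<in> join_irr - ell r then 1 else 0)"
        using fun_cong[OF eq, of "Inr j"] unfolding A B .
      then show ?thesis by (auto split: if_splits)
    qed
    have sub: "ell r \<subseteq> join_irr" "ell r' \<subseteq> join_irr" by (auto simp: ell_def)
    have "j \<in> ell r' \<longleftrightarrow> j \<in> ell r" for j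
      using iff[of j] sub by blast
    then have "ell r' = ell r" by (rule set_eqI)
    then show False using ell_inj[of r' r] h(1) by simp
  qed
  show ?thesis
  proof (intro conjI allI impI)
    show "card T = i" by (rule cardT)
    show "Sup_fin T = p" by (rule supT)
    show "mlcm (insert (umon p) (umon ` S)) = mlcm (insert (umon r) (umon ` T))" by (rule P2)
    fix r' T' assume "r' \<noteq> r \<and> T' \<subseteq> upper_nbrs r'"
    then show "mlcm (insert (umon r') (umon ` T')) \<noteq> mlcm (insert (umon p) (umon ` S))"
      using P3 by blast
  qed
qed

end
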